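(* Let $K$ be a compact Hausdorff space and $\phi:K\to K$ a continuous map. Suppose there is an uncountable subset $A\subset K$ such that $\phi|_A$ is injective and $\phi(A)\cap A=\emptyset$. Then the composition operator $T=C_\phi:C(K)\to C(K)$, $f\mapsto f\circ\phi$, has the property that for every $g\in\mathfrak B(K)$, the operator $T^*+M_g^*:C(K)^*\to C(K)^*$ does not have separable range.
   Context: $C(K)$ is the Banach space of continuous real-valued functions on $K$ with the sup norm, and $C(K)^*$ is identified with the space of finite regular signed Borel measures on $K$. $\mathfrak B(K)$ denotes the space of bounded real-valued Borel functions on $K$. For $g\in\mathfrak B(K)$, $M_g^*:C(K)^*\to C(K)^*$ is the operator sending a measure $\mu$ to the measure $g\,\mathrm d\mu$. $T^*$ denotes the Banach space adjoint of $T$. *)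

theory Defs
  imports "HOL-Analysis.Analysis"
begin

text \<open>A finite Borel measure on the (compact Hausdorff) space K = UNIV which is regular:
  outer regular by open sets and inner regular by compact sets on all Borel sets.\<close>
definition regular_measure :: "'a::topological_space measure \<Rightarrow> bool" where
  "regular_measure M \<longleftrightarrow> sets M = sets borel \<and> finite_measure M \<and>
     (\<forall>E\<in>sets borel.
        emeasure M E = (INF U\<in>{U. open U \<and> E \<subseteq> U}. emeasure M U) \<and>
        emeasure M E = (SUP C\<in>{C. compact C \<and> C \<subseteq> E}. emeasure M C))"

text \<open>The finite regular signed Borel measure M1 - M2 (as a set function; every finite regular
  signed Borel measure arises this way, e.g. via its Jordan decomposition).\<close>
definition signed_of :: "'a::topological_space measure \<Rightarrow> 'a measure \<Rightarrow> 'a set \<Rightarrow> real" where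
  "signed_of M1 M2 = (\<lambda>E. measure M1 E - measure M2 E)"

text \<open>Adjoint of the composition operator C_phi: the push-forward of a signed measure.\<close>
definition comp_adj :: "('a \<Rightarrow> 'a) \<Rightarrow> ('a set \<Rightarrow> real) \<Rightarrow> 'a set \<Rightarrow> real" where
  "comp_adj \<phi> \<nu> = (\<lambda>E. \<nu> (\<phi> -` E))"

text \<open>M_g^* applied to the signed measure M1 - M2: the measure g d(M1 - M2).\<close>
definition mult_adj :: "('a::topological_space \<Rightarrow> real) \<Rightarrow> 'a measure \<Rightarrow> 'a measure \<Rightarrow> 'a set \<Rightarrow> real" where
  "mult_adj g M1 M2 = (\<lambda>E. (LINT x:E|M1. g x) - (LINT x:E|M2. g x))"

text \<open>Total variation norm (the dual norm on C(K)^*).\<close>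
definition tv_norm :: "('a::topological_space set \<Rightarrow> real) \<Rightarrow> real" where
  "tv_norm \<nu> = (SUP P\<in>{P. finite P \<and> disjoint P \<and> P \<subseteq> sets borel}. \<Sum>E\<in>P. \<bar>\<nu> E\<bar>)"

definition adj_range :: "('a::topological_space \<Rightarrow> 'a) \<Rightarrow> ('a \<Rightarrow> real) \<Rightarrow> ('a set \<Rightarrow> real) set" where
  "adj_range \<phi> g = {(\<lambda>E. comp_adj \<phi> (signed_of M1 M2) E + mult_adj g M1 M2 E) | M1 M2.
                      regular_measure M1 \<and> regular_measure M2}"

definition tv_separable :: "('a::topological_space set \<Rightarrow> real) set \<Rightarrow> bool" where
  "tv_separable R \<longleftrightarrow> (\<exists>D. countable D \<and> D \<subseteq> R \<and>
     (\<forall>r\<in>R. \<forall>e>0. \<exists>d\<in>D. tv_norm (\<lambda>E. r E - d E) < e))"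

end

theory Submission imports Defs "HOL-Probability.Giry_Monad" begin

lemma set_int_bound:
  fixes g :: "'a::topological_space \<Rightarrow> real"
  assumes "finite_measure M" "E \<in> sets M" "g \<in> borel_measurable M" "\<And>x. \<bar>g x\<bar> \<le> B"
  shows "\<bar>LINT x:E|M. g x\<bar> \<le> B * measure M E"
proof -
  interpret finite_measure M by fact
  have B0: "0 \<le> B" using assms(4) abs_ge_zero order_trans by blast
  have i1: "integrable M (\<lambda>x. indicator E x * g x)"
    by (rule integrable_const_bound[where B=B]) (use assms B0 in \<open>auto simp: indicator_def\<close>)
  have i2: "integrable M (\<lambda>x. B * indicator E x)"
    using assms by (intro integrable_mult_right) (simp add: integrable_indicator_iff less_top[symmetric])
  have "\<bar>LINT x:E|M. g x\<bar> = \<bar>\<integral>x. indicator E x * g x \<partial>M\<bar>"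
    by (simp add: set_lebesgue_integral_def)
  also have "\<dots> \<le> (\<integral>x. \<bar>indicator E x * g x\<bar> \<partial>M)"
    by (rule integral_abs_bound)
  also have "\<dots> \<le> (\<integral>x. B * indicator E x \<partial>M)"
    using i1 i2 assms(4) by (intro integral_mono) (auto simp: indicator_def)
  also have "\<dots> = B * measure M E"
    using assms by simp
  finally show ?thesis .
qed

lemma regular_return: "regular_measure (return borel (a::'a::t2_space))"
  unfolding regular_measure_def
proof (intro conjI ballI)
  show "sets (return borel a) = sets borel" by simp
  show "finite_measure (return borel a)"
    by (rule prob_space.finite_measure) (rule prob_space_return, simp)
next
  fix E :: "'a set" assume E: "E \<in> sets borel"
  show "emeasure (return borel a) E = (INF U\<in>{U. open U \<and> E \<subseteq> U}. emeasure (return borel a) U)"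
  proof (cases "a \<in> E")
    case True
    have "(INF U\<in>{U. open U \<and> E \<subseteq> U}. emeasure (return borel a) U) = (INF U\<in>{U. open U \<and> E \<subseteq> U}. 1)"
      using True by (intro INF_cong) auto
    also have "\<dots> = 1" by (rule INF_const) auto
    finally show ?thesis using True E by simp
  next
    case False
    have "(INF U\<in>{U. open U \<and> E \<subseteq> U}. emeasure (return borel a) U) \<le> emeasure (return borel a) (-{a})"
      using False by (intro INF_lower) (auto simp: open_Compl)
    also have "\<dots> = 0" by simp
    finally show ?thesis using False E by simp
  qed
  show "emeasure (return borel a) E = (SUP C\<in>{C. compact C \<and> C \<subseteq> E}. emeasure (return borel a) C)"
  proof (cases "a \<in> E")
    case True
    have "1 \<le> (SUP C\<in>{C. compact C \<and> C \<subseteq> E}. emeasure (return borel a) C)"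
      using True by (intro SUP_upper2[of "{a}"]) (auto simp: compact_imp_closed)
    moreover have "(SUP C\<in>{C. compact C \<and> C \<subseteq> E}. emeasure (return borel a) C) \<le> 1"
      by (intro SUP_least) (auto simp: compact_imp_closed indicator_def)
    ultimately show ?thesis using True E by (simp add: antisym)
  next
    case False
    have "(SUP C\<in>{C. compact C \<and> C \<subseteq> E}. emeasure (return borel a) C) = (SUP C\<in>{C. compact C \<and> C \<subseteq> E}. 0)"
      using False by (intro SUP_cong) (auto simp: compact_imp_closed indicator_def)
    also have "\<dots> = 0" by (rule SUP_const) auto
    finally show ?thesis using False E by simp
  qed
qed

lemma regular_null: "regular_measure (null_measure (borel::'a::t2_space measure))"
  unfolding regular_measure_def
proof (intro conjI ballI)
  show "finite_measure (null_measure (borel::'a measure))"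
    by (rule finite_measureI) simp
  fix E :: "'a set"
  show "emeasure (null_measure borel) E = (INF U\<in>{U. open U \<and> E \<subseteq> U}. emeasure (null_measure borel) U)"
  proof -
    have "{U. open U \<and> E \<subseteq> U} \<noteq> {}" by auto
    then show ?thesis by simp
  qed
  show "emeasure (null_measure borel) E = (SUP C\<in>{C. compact C \<and> C \<subseteq> E}. emeasure (null_measure borel) C)"
  proof -
    have "{C. compact C \<and> C \<subseteq> E} \<noteq> {}" by (auto intro: exI[of _ "{}"])
    then show ?thesis by simp
  qed
qed simp

lemma sum_meas_le:
  assumes "finite_measure M" "sets M = sets borel" "finite P" "disjoint_family_on f P" "f ` P \<subseteq> sets borel"
  shows "(\<Sum>E\<in>P. measure M (f E)) \<le> measure M UNIV"
proof -
  interpret finite_measure M by fact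
  have sp: "space M = UNIV" using sets_eq_imp_space_eq[OF assms(2)] by simp
  have "(\<Sum>E\<in>P. measure M (f E)) = measure M (\<Union>E\<in>P. f E)"
    using assms by (intro finite_measure_finite_Union[symmetric]) auto
  also have "\<dots> \<le> measure M (space M)" by (rule bounded_measure)
  finally show ?thesis using sp by simp
qed

lemma abs_helper:
  fixes x y u v U V :: real
  shows "\<bar>u\<bar> \<le> U \<Longrightarrow> \<bar>v\<bar> \<le> V \<Longrightarrow> 0 \<le> x \<Longrightarrow> 0 \<le> y \<Longrightarrow> \<bar>x - y + (u - v)\<bar> \<le> x + y + U + V"
  by arith

lemma range_bound:
  fixes \<phi> :: "'a::t2_space \<Rightarrow> 'a" and g :: "'a \<Rightarrow> real"
  assumes phi: "\<phi> \<in> borel_measurable borel" and g: "g \<in> borel_measurable borel" and gB: "\<And>x. \<bar>g x\<bar> \<le> B"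
    and h: "h \<in> adj_range \<phi> g"
  shows "\<exists>C. \<forall>P. finite P \<and> disjoint P \<and> P \<subseteq> sets borel \<longrightarrow> (\<Sum>E\<in>P. \<bar>h E\<bar>) \<le> C"
proof -
  obtain M1 M2 where h_eq: "h = (\<lambda>E. comp_adj \<phi> (signed_of M1 M2) E + mult_adj g M1 M2 E)"
    and r1: "regular_measure M1" and r2: "regular_measure M2"
    using h unfolding adj_range_def by blast
  have s1: "sets M1 = sets borel" and f1: "finite_measure M1"
    and s2: "sets M2 = sets borel" and f2: "finite_measure M2"
    using r1 r2 unfolding regular_measure_def by blast+
  have g1: "g \<in> borel_measurable M1" unfolding measurable_cong_sets[OF s1 refl] by (rule g)
  have g2: "g \<in> borel_measurable M2" unfolding measurable_cong_sets[OF s2 refl] by (rule g)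
  have pre: "\<phi> -` E \<in> sets borel" if "E \<in> sets borel" for E
    using measurable_sets[OF phi that] by simp
  have pt: "\<bar>h E\<bar> \<le> measure M1 (\<phi> -` E) + measure M2 (\<phi> -` E) + B * measure M1 E + B * measure M2 E"
    if E: "E \<in> sets borel" for E
  proof -
    have "\<bar>LINT x:E|M1. g x\<bar> \<le> B * measure M1 E"
      using set_int_bound[OF f1 _ g1 gB] E s1 by simp
    moreover have "\<bar>LINT x:E|M2. g x\<bar> \<le> B * measure M2 E"
      using set_int_bound[OF f2 _ g2 gB] E s2 by simp
    moreover have "0 \<le> measure M1 (\<phi> -` E)" "0 \<le> measure M2 (\<phi> -` E)" by auto
    ultimately show ?thesis unfolding h_eq comp_adj_def signed_of_def mult_adj_def
      by (rule abs_helper)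
  qed
  have "(\<Sum>E\<in>P. \<bar>h E\<bar>) \<le> measure M1 UNIV + measure M2 UNIV + B * measure M1 UNIV + B * measure M2 UNIV"
    if P: "finite P" "disjoint P" "P \<subseteq> sets borel" for P
  proof -
    have dj: "disjoint_family_on (\<lambda>E. E) P" "disjoint_family_on (\<lambda>E. \<phi> -` E) P"
      using P(2) unfolding disjoint_family_on_def pairwise_def disjnt_def by auto
    have im: "(\<lambda>E. E) ` P \<subseteq> sets borel" "(\<lambda>E. \<phi> -` E) ` P \<subseteq> sets borel"
      using P(3) pre by auto
    have B0: "0 \<le> B" using gB abs_ge_zero order_trans by blast
    have "(\<Sum>E\<in>P. \<bar>h E\<bar>) \<le> (\<Sum>E\<in>P. measure M1 (\<phi> -` E) + measure M2 (\<phi> -` E) + B * measure M1 E + B * measure M2 E)"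
      using P(3) pt by (intro sum_mono) auto
    also have "\<dots> = (\<Sum>E\<in>P. measure M1 (\<phi> -` E)) + (\<Sum>E\<in>P. measure M2 (\<phi> -` E)) + B * (\<Sum>E\<in>P. measure M1 E) + B * (\<Sum>E\<in>P. measure M2 E)"
      by (simp add: sum.distrib sum_distrib_left)
    also have "\<dots> \<le> measure M1 UNIV + measure M2 UNIV + B * measure M1 UNIV + B * measure M2 UNIV"
    proof -
      have a1: "B * (\<Sum>E\<in>P. measure M1 E) \<le> B * measure M1 UNIV"
        using sum_meas_le[OF f1 s1 P(1) dj(1) im(1)] B0 by (rule mult_left_mono)
      have a2: "B * (\<Sum>E\<in>P. measure M2 E) \<le> B * measure M2 UNIV"
        using sum_meas_le[OF f2 s2 P(1) dj(1) im(1)] B0 by (rule mult_left_mono)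
      show ?thesis
        using sum_meas_le[OF f1 s1 P(1) dj(2) im(2)] sum_meas_le[OF f2 s2 P(1) dj(2) im(2)] a1 a2
        by linarith
    qed
    finally show ?thesis .
  qed
  then show ?thesis by blast
qed

lemma tv_ge:
  fixes h :: "'a::topological_space set \<Rightarrow> real"
  assumes "\<forall>P. finite P \<and> disjoint P \<and> P \<subseteq> sets borel \<longrightarrow> (\<Sum>E\<in>P. \<bar>h E\<bar>) \<le> C" and "E \<in> sets borel"
  shows "\<bar>h E\<bar> \<le> tv_norm h"
proof -
  have "(\<Sum>E\<in>{E}. \<bar>h E\<bar>) \<le> (SUP P\<in>{P. finite P \<and> disjoint P \<and> P \<subseteq> sets borel}. \<Sum>E\<in>P. \<bar>h E\<bar>)"
    using assms by (intro cSUP_upper) (auto simp: bdd_above_def)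
  then show ?thesis unfolding tv_norm_def by simp
qed

lemma diff_bound:
  fixes h k :: "'a::topological_space set \<Rightarrow> real"
  assumes "\<forall>P. finite P \<and> disjoint P \<and> P \<subseteq> sets borel \<longrightarrow> (\<Sum>E\<in>P. \<bar>h E\<bar>) \<le> C"
    "\<forall>P. finite P \<and> disjoint P \<and> P \<subseteq> sets borel \<longrightarrow> (\<Sum>E\<in>P. \<bar>k E\<bar>) \<le> C'"
  shows "\<forall>P. finite P \<and> disjoint P \<and> P \<subseteq> sets borel \<longrightarrow> (\<Sum>E\<in>P. \<bar>h E - k E\<bar>) \<le> C + C'"
proof (intro allI impI)
  fix P :: "'a set set" assume P: "finite P \<and> disjoint P \<and> P \<subseteq> sets borel"
  have "(\<Sum>E\<in>P. \<bar>h E - k E\<bar>) \<le> (\<Sum>E\<in>P. \<bar>h E\<bar> + \<bar>k E\<bar>)"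
    by (intro sum_mono) auto
  also have "\<dots> = (\<Sum>E\<in>P. \<bar>h E\<bar>) + (\<Sum>E\<in>P. \<bar>k E\<bar>)" by (simp add: sum.distrib)
  also have "\<dots> \<le> C + C'" using assms P by (intro add_mono) auto
  finally show "(\<Sum>E\<in>P. \<bar>h E - k E\<bar>) \<le> C + C'" .
qed

theorem lemma4:
  fixes \<phi> :: "'a::t2_space \<Rightarrow> 'a" and A :: "'a set"
  assumes "compact (UNIV :: 'a set)"
    and "continuous_on UNIV \<phi>"
    and "uncountable A" and "inj_on \<phi> A" and "\<phi> ` A \<inter> A = {}"
  shows "\<forall>g :: 'a \<Rightarrow> real. g \<in> borel_measurable borel \<and> bounded (range g) \<longrightarrow>
           \<not> tv_separable (adj_range \<phi> g)"
proof (intro allI impI notI)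
  fix g :: "'a \<Rightarrow> real"
  assume gass: "g \<in> borel_measurable borel \<and> bounded (range g)"
  assume sep: "tv_separable (adj_range \<phi> g)"
  have g: "g \<in> borel_measurable borel" using gass by simp
  obtain B where gB: "\<And>x. \<bar>g x\<bar> \<le> B"
    using gass unfolding bounded_iff by auto
  have phi: "\<phi> \<in> borel_measurable borel"
    using assms(2) by (rule borel_measurable_continuous_onI)
  obtain D where D: "countable D" "D \<subseteq> adj_range \<phi> g"
    and dense: "\<forall>r\<in>adj_range \<phi> g. \<forall>e>0. \<exists>d\<in>D. tv_norm (\<lambda>E. r E - d E) < e"
    using sep unfolding tv_separable_def by blast
  define r where "r a = (\<lambda>E. comp_adj \<phi> (signed_of (return borel a) (null_measure borel)) E
       + mult_adj g (return borel a) (null_measure borel) E)" for a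
  have rR: "r a \<in> adj_range \<phi> g" for a
    unfolding r_def adj_range_def using regular_return regular_null by blast
  have rval: "r a E = indicator E (\<phi> a) + indicator E a * g a" if E: "E \<in> sets borel" for a E
  proof -
    have pre: "\<phi> -` E \<in> sets borel" using measurable_sets[OF phi E] by simp
    have ms: "(\<lambda>x. indicator E x *\<^sub>R g x) \<in> borel_measurable borel" using E g by measurable
    have "(LINT x:E|return borel a. g x) = indicator E a * g a"
      unfolding set_lebesgue_integral_def using integral_return[OF _ ms, of a] by simp
    then show ?thesis unfolding r_def comp_adj_def signed_of_def mult_adj_def
      using measure_return[OF pre, of a] by (simp add: indicator_def set_lebesgue_integral_def)
  qed
  have half: "(0::real) < 1/2" by simp
  have "\<forall>a\<in>A. \<exists>d\<in>D. tv_norm (\<lambda>E. r a E - d E) < 1/2"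
    using dense rR half by blast
  then have "\<exists>f. \<forall>a\<in>A. f a \<in> D \<and> tv_norm (\<lambda>E. r a E - f a E) < 1/2"
    using bchoice[of A "\<lambda>a d. d \<in> D \<and> tv_norm (\<lambda>E. r a E - d E) < 1/2"] by blast
  then obtain f where f0: "\<forall>a\<in>A. f a \<in> D \<and> tv_norm (\<lambda>E. r a E - f a E) < 1/2"
    by (elim exE)
  then have f: "\<And>a. a \<in> A \<Longrightarrow> f a \<in> D \<and> tv_norm (\<lambda>E. r a E - f a E) < 1/2"
    by blast
  have "\<not> inj_on f A"
  proof
    assume "inj_on f A"
    moreover have "countable (f ` A)" using f D(1) by (meson countable_subset image_subsetI)
    ultimately have "countable A" using countable_image_inj_on by blast
    then show False using assms(3) by simp
  qed
  then obtain a b where ab: "a \<in> A" "b \<in> A" "a \<noteq> b" "f a = f b"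
    unfolding inj_on_def by blast
  define d where "d = f a"
  have dR: "d \<in> adj_range \<phi> g" using f ab D(2) d_def by blast
  obtain Cd where Cd: "\<forall>P. finite P \<and> disjoint P \<and> P \<subseteq> sets borel \<longrightarrow> (\<Sum>E\<in>P. \<bar>d E\<bar>) \<le> Cd"
    using range_bound[OF phi g gB dR] by blast
  obtain Ca where Ca: "\<forall>P. finite P \<and> disjoint P \<and> P \<subseteq> sets borel \<longrightarrow> (\<Sum>E\<in>P. \<bar>r a E\<bar>) \<le> Ca"
    using range_bound[OF phi g gB rR] by blast
  obtain Cb where Cb: "\<forall>P. finite P \<and> disjoint P \<and> P \<subseteq> sets borel \<longrightarrow> (\<Sum>E\<in>P. \<bar>r b E\<bar>) \<le> Cb"
    using range_bound[OF phi g gB rR] by blast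
  define E where "E = {\<phi> a}"
  have Eb: "E \<in> sets borel" unfolding E_def by simp
  have "\<bar>r a E - d E\<bar> \<le> tv_norm (\<lambda>E. r a E - d E)"
    using tv_ge[OF diff_bound[OF Ca Cd] Eb] .
  also have "\<dots> < 1/2" using f ab d_def by blast
  finally have 1: "\<bar>r a E - d E\<bar> < 1/2" .
  have "\<bar>r b E - d E\<bar> \<le> tv_norm (\<lambda>E. r b E - d E)"
    using tv_ge[OF diff_bound[OF Cb Cd] Eb] .
  also have "\<dots> < 1/2" using f ab d_def by metis
  finally have 2: "\<bar>r b E - d E\<bar> < 1/2" .
  have na: "\<phi> a \<noteq> a" "\<phi> a \<noteq> b" using assms(5) ab by auto
  have nb: "\<phi> b \<noteq> \<phi> a" using assms(4) ab unfolding inj_on_def by blast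
  have "r a E = 1" "r b E = 0"
    using rval[OF Eb, of a] rval[OF Eb, of b] na nb unfolding E_def by auto
  then show False using 1 2 by linarith
qed

end
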